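(* Let $X\subset\mathbb{R}^n$. There exists a minimal factorization of $X$: a partition $J_1,\dots,J_N$ of $\{1,\dots,n\}$ inducing a factorization of $X$ such that for every partition $I_1,\dots,I_M$ of $\{1,\dots,n\}$ inducing a factorization of $X$ one has $I_i=\bigcup_{k:\,J_k\subset I_i}J_k$ for all $i=1,\dots,M$.
   Context: A partition $J_1,\dots,J_N$ of $\{1,\dots,n\}$ induces a factorization of $X$ (and $X$ factors with respect to it) if there exist sets $X_i\subset\mathbb{R}^{|J_i|}$ such that $X=\{x\in\mathbb{R}^n: P_{J_i}x\in X_i \text{ for } i=1,\dots,N\}$, where $P_{J}x=(x_j)_{j\in J}$ is the canonical projection. *)

theory Defs
  imports "HOL-Analysis.Analysis" "HOL-Library.Disjoint_Sets"
begin

definition proj :: "'n set \<Rightarrow> real ^ 'n \<Rightarrow> ('n \<Rightarrow> real)" where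
  "proj J x = restrict (\<lambda>j. x $ j) J"

definition induces_factorization :: "(real ^ 'n) set \<Rightarrow> 'n set set \<Rightarrow> bool" where
  "induces_factorization X P \<longleftrightarrow> partition_on (UNIV :: 'n set) P \<and>
     (\<exists>Xs :: 'n set \<Rightarrow> ('n \<Rightarrow> real) set. X = {x. \<forall>J\<in>P. proj J x \<in> Xs J})"

end

theory Submission
  imports Defs
begin

definition mixv :: "'n set \<Rightarrow> real ^ 'n \<Rightarrow> real ^ 'n \<Rightarrow> real ^ 'n" where
  "mixv S x y = (\<chi> j. if j \<in> S then x $ j else y $ j)"

definition splits :: "(real ^ 'n) set \<Rightarrow> 'n set \<Rightarrow> bool" where
  "splits X S \<longleftrightarrow> (\<forall>x\<in>X. \<forall>y\<in>X. mixv S x y \<in> X)"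

lemma proj_eq_iff: "proj J x = proj J y \<longleftrightarrow> (\<forall>j\<in>J. x $ j = y $ j)"
  by (auto simp: proj_def restrict_def fun_eq_iff)

lemma splits_UNIV: "splits X UNIV"
  by (simp add: splits_def mixv_def)

lemma splits_compl: "splits X S \<Longrightarrow> splits X (- S)"
proof -
  assume "splits X S"
  have "mixv (- S) x y = mixv S y x" for x y
    by (simp add: mixv_def vec_eq_iff)
  then show ?thesis using \<open>splits X S\<close> by (simp add: splits_def)
qed

lemma splits_Int: "splits X S \<Longrightarrow> splits X T \<Longrightarrow> splits X (S \<inter> T)"
proof -
  assume a: "splits X S" "splits X T"
  have "mixv (S \<inter> T) x y = mixv S (mixv T x y) y" for x y
    by (simp add: mixv_def vec_eq_iff)
  then show ?thesis using a by (simp add: splits_def)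
qed

lemma splits_Inter: "finite F \<Longrightarrow> (\<forall>S\<in>F. splits X S) \<Longrightarrow> splits X (\<Inter>F)"
  by (induction F rule: finite_induct) (auto simp: splits_UNIV splits_Int)

lemma fact_splits:
  assumes "induces_factorization X P" "A \<in> P"
  shows "splits X A"
proof -
  from assms(1) obtain Xs where pa: "partition_on UNIV P"
    and X: "X = {x. \<forall>J\<in>P. proj J x \<in> Xs J}"
    unfolding induces_factorization_def by blast
  have dj: "disjoint P" using pa by (simp add: partition_onD2)
  show ?thesis unfolding splits_def
  proof (intro ballI)
    fix x y assume x: "x \<in> X" and y: "y \<in> X"
    have "proj J (mixv A x y) \<in> Xs J" if J: "J \<in> P" for J
    proof (cases "J = A")
      case True
      then have "proj J (mixv A x y) = proj J x" by (simp add: proj_eq_iff mixv_def)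
      then show ?thesis using x J X by auto
    next
      case False
      then have "J \<inter> A = {}" using dj J assms(2) by (meson disjointD)
      then have "proj J (mixv A x y) = proj J y" by (auto simp: proj_eq_iff mixv_def)
      then show ?thesis using y J X by auto
    qed
    then show "mixv A x y \<in> X" using X by auto
  qed
qed

lemma splits_fact:
  fixes X :: "(real ^ 'n) set"
  assumes pa: "partition_on UNIV P" and sp: "\<forall>A\<in>P. splits X A"
  shows "induces_factorization X P"
proof (cases "X = {}")
  case True
  have "\<Union>P = UNIV" using pa by (simp add: partition_on_def)
  then have "P \<noteq> {}" by (metis Union_empty empty_not_UNIV)
  then obtain J0 where "J0 \<in> P" by blast
  then have "{x. \<forall>J\<in>P. proj J x \<in> (\<lambda>_. {}) J} = {}" by blast
  then have "X = {x. \<forall>J\<in>P. proj J x \<in> (\<lambda>_. {}) J}" using True by simp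
  then show ?thesis using pa unfolding induces_factorization_def by (intro conjI exI[where x="\<lambda>_. {}"])
next
  case False
  then obtain x0 where x0: "x0 \<in> X" by blast
  have "X = {z. \<forall>J\<in>P. proj J z \<in> proj J ` X}"
  proof
    show "X \<subseteq> {z. \<forall>J\<in>P. proj J z \<in> proj J ` X}" by blast
  next
    show "{z. \<forall>J\<in>P. proj J z \<in> proj J ` X} \<subseteq> X"
    proof
      fix z assume "z \<in> {z. \<forall>J\<in>P. proj J z \<in> proj J ` X}"
      then have hz0: "\<forall>J\<in>P. \<exists>x\<in>X. proj J z = proj J x" by blast
      have hz: "\<forall>J\<in>P. \<exists>x\<in>X. \<forall>j\<in>J. z $ j = x $ j"
      proof
        fix J assume "J \<in> P"
        then obtain x where "x \<in> X" "proj J z = proj J x" using hz0 by blast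
        then show "\<exists>x\<in>X. \<forall>j\<in>J. z $ j = x $ j" unfolding proj_eq_iff by blast
      qed
      have fin: "finite P" by (rule finite)
      have "F \<subseteq> P \<Longrightarrow> \<exists>w\<in>X. \<forall>j\<in>\<Union>F. z $ j = w $ j" if "finite F" for F
        using that
      proof (induction F rule: finite_induct)
        case empty then show ?case using x0 by auto
      next
        case (insert A F)
        have "F \<subseteq> P" using insert.prems by simp
        from insert.IH[OF this] obtain w where w: "w \<in> X" "\<forall>j\<in>\<Union>F. z $ j = w $ j" by (rule bexE)
        have AP: "A \<in> P" using insert.prems by simp
        from bspec[OF hz AP] obtain x where x: "x \<in> X" "\<forall>j\<in>A. z $ j = x $ j" by (rule bexE)
        have "splits X A" using bspec[OF sp AP] .
        then have "mixv A x w \<in> X" using x(1) w(1) unfolding splits_def by simp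
        moreover have "\<forall>j\<in>\<Union>(insert A F). z $ j = mixv A x w $ j"
        proof
          fix j assume "j \<in> \<Union>(insert A F)"
          then have jj: "j \<in> A \<or> j \<in> \<Union>F" by simp
          show "z $ j = mixv A x w $ j"
          proof (cases "j \<in> A")
            case True then show ?thesis using x(2) by (simp add: mixv_def)
          next
            case False
            then have "j \<in> \<Union>F" using jj by simp
            then have "z $ j = w $ j" using w(2) by (rule bspec[rotated])
            then show ?thesis using False by (simp add: mixv_def)
          qed
        qed
        ultimately show ?case by (rule bexI[rotated])
      qed
      from this[OF fin order_refl] obtain w where "w \<in> X" "\<forall>j\<in>\<Union>P. z $ j = w $ j" by (rule bexE)
      moreover have "\<Union>P = UNIV" using pa by (simp add: partition_on_def)
      ultimately have "\<forall>j. z $ j = w $ j" by simp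
      then have "z = w" by (simp add: vec_eq_iff)
      then show "z \<in> X" using \<open>w \<in> X\<close> by simp
    qed
  qed
  then show ?thesis using pa unfolding induces_factorization_def by (intro conjI exI[where x="\<lambda>J. proj J ` X"])
qed

theorem lemma2:
  fixes X :: "(real ^ 'n) set"
  shows "\<exists>P. induces_factorization X P \<and>
           (\<forall>Q. induces_factorization X Q \<longrightarrow> (\<forall>I\<in>Q. I = \<Union>{J\<in>P. J \<subseteq> I}))"
proof -
  define cls where "cls i = \<Inter>{S. splits X S \<and> i \<in> S}" for i :: 'n
  define P where "P = range cls"
  have cls_sp: "splits X (cls i)" for i
    unfolding cls_def by (rule splits_Inter) (rule finite, blast)
  have cls_in: "i \<in> cls i" for i unfolding cls_def by auto
  have cls_min: "splits X S \<Longrightarrow> i \<in> S \<Longrightarrow> cls i \<subseteq> S" for S i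
    unfolding cls_def by auto
  have sub: "j \<in> cls i \<Longrightarrow> cls j \<subseteq> cls i" for i j
    using cls_min cls_sp by blast
  have memb: "k \<in> cls i \<Longrightarrow> i \<in> cls k" for i k
  proof (rule ccontr)
    assume "k \<in> cls i" "i \<notin> cls k"
    then have "cls i \<subseteq> - cls k" using cls_min[OF splits_compl[OF cls_sp[of k]]] by blast
    then show False using \<open>k \<in> cls i\<close> cls_in by blast
  qed
  have eq: "k \<in> cls i \<Longrightarrow> cls k = cls i" for i k
    using sub memb by blast
  have pa: "partition_on UNIV P"
  proof (rule partition_onI)
    show "\<Union>P = UNIV" unfolding P_def using cls_in by blast
    show "{} \<notin> P" unfolding P_def using cls_in by blast
    fix p q assume "p \<in> P" "q \<in> P" "p \<noteq> q"
    then obtain i j where ij: "p = cls i" "q = cls j" unfolding P_def by blast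
    show "disjnt p q" unfolding disjnt_def
    proof (rule ccontr)
      assume "p \<inter> q \<noteq> {}"
      then obtain k where "k \<in> cls i" "k \<in> cls j" using ij by blast
      then have "cls i = cls j" using eq by metis
      then show False using ij \<open>p \<noteq> q\<close> by simp
    qed
  qed
  have fP: "induces_factorization X P"
  proof (rule splits_fact[OF pa], rule ballI)
    fix A assume "A \<in> P"
    then obtain i where "A = cls i" unfolding P_def by blast
    then show "splits X A" using cls_sp by simp
  qed
  show ?thesis
  proof (rule exI[of _ P], rule conjI[OF fP], intro allI impI ballI)
    fix Q I assume "induces_factorization X Q" "I \<in> Q"
    then have "splits X I" by (rule fact_splits)
    then have ci: "i \<in> I \<Longrightarrow> cls i \<subseteq> I" for i using cls_min by blast
    show "I = \<Union>{J\<in>P. J \<subseteq> I}"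
    proof
      show "\<Union>{J\<in>P. J \<subseteq> I} \<subseteq> I" by blast
      show "I \<subseteq> \<Union>{J\<in>P. J \<subseteq> I}"
      proof
        fix i assume "i \<in> I"
        then have "cls i \<in> {J\<in>P. J \<subseteq> I}" using ci unfolding P_def by blast
        then show "i \<in> \<Union>{J\<in>P. J \<subseteq> I}" using cls_in[of i] by blast
      qed
    qed
  qed
qed

end
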